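(* Let $1<\alpha<2$, $b>0$, $N\ge 2$ an integer, $h=b/N$, $\kappa_\alpha=-1/(2\cos(\alpha\pi/2))>0$, and let $A_h=\frac{\kappa_\alpha}{h^{\alpha-1}\Gamma(4-\alpha)}B_h$, where $B_h=(b_{i,j})_{i,j=1}^{N-1}$ is the symmetric matrix with $b_{i,i}=8-2^{4-\alpha}+\widetilde b_{i,i}$ ($1\le i\le N-1$), $b_{i,i+1}=b_{i+1,i}=-7-3^{3-\alpha}+2^{5-\alpha}+\widetilde b_{i,i+1}$ ($1\le i\le N-2$), and for $m=|j-i|\ge2$, $b_{i,j}=-(m+2)^{3-\alpha}+4(m+1)^{3-\alpha}-6m^{3-\alpha}+4(m-1)^{3-\alpha}-(m-2)^{3-\alpha}$, with $$\widetilde b_{i,i}=2\big[(i+1)^{3-\alpha}-2(3-\alpha)i^{2-\alpha}-(i-1)^{3-\alpha}\big]+2\big[(N-i+1)^{3-\alpha}-2(3-\alpha)(N-i)^{2-\alpha}-(N-i-1)^{3-\alpha}\big],$$ $$\widetilde b_{i,i+1}=-2\big[(i+1)^{3-\alpha}-i^{3-\alpha}\big]+(3-\alpha)\big[(i+1)^{2-\alpha}+i^{2-\alpha}\big]-2\big[(N-i)^{3-\alpha}-(N-i-1)^{3-\alpha}\big]+(3-\alpha)\big[(N-i)^{2-\alpha}+(N-i-1)^{2-\alpha}\big].$$ Let $D_h$ be the diagonal part of $A_h$. Then $1\le \lambda_{\max}(D_h^{-1}A_h)<2$.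
   Context: Here $0^{p}=0$ for $p>0$. $A_h$ is the stiffness matrix of the piecewise linear finite element discretization on the uniform mesh of $(0,b)$ of the fractional Laplacian $C_\alpha\int_0^b\frac{u(x)-u(y)}{|x-y|^{1+\alpha}}dy$ with zero exterior condition; $\lambda_{\max}$ denotes the largest eigenvalue. *)

theory Defs
  imports "HOL-Analysis.Analysis" "Jordan_Normal_Form.Matrix" "Jordan_Normal_Form.Char_Poly"
begin

text \<open>Entries of B_h, 1-based indices i j in 1..N-1; powr with 0 powr p = 0.\<close>

definition btil_diag :: "real \<Rightarrow> nat \<Rightarrow> nat \<Rightarrow> real" where
  "btil_diag \<alpha> N i =
     2 * ((real i + 1) powr (3 - \<alpha>) - 2 * (3 - \<alpha>) * real i powr (2 - \<alpha>) - (real i - 1) powr (3 - \<alpha>))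
   + 2 * ((real N - real i + 1) powr (3 - \<alpha>) - 2 * (3 - \<alpha>) * (real N - real i) powr (2 - \<alpha>)
          - (real N - real i - 1) powr (3 - \<alpha>))"

definition btil_off :: "real \<Rightarrow> nat \<Rightarrow> nat \<Rightarrow> real" where
  "btil_off \<alpha> N i =
     - 2 * ((real i + 1) powr (3 - \<alpha>) - real i powr (3 - \<alpha>))
   + (3 - \<alpha>) * ((real i + 1) powr (2 - \<alpha>) + real i powr (2 - \<alpha>))
   - 2 * ((real N - real i) powr (3 - \<alpha>) - (real N - real i - 1) powr (3 - \<alpha>))
   + (3 - \<alpha>) * ((real N - real i) powr (2 - \<alpha>) + (real N - real i - 1) powr (2 - \<alpha>))"

definition b_entry :: "real \<Rightarrow> nat \<Rightarrow> nat \<Rightarrow> nat \<Rightarrow> real" where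
  "b_entry \<alpha> N i j =
    (if i = j then 8 - 2 powr (4 - \<alpha>) + btil_diag \<alpha> N i
     else if j = i + 1 then -7 - 3 powr (3 - \<alpha>) + 2 powr (5 - \<alpha>) + btil_off \<alpha> N i
     else if i = j + 1 then -7 - 3 powr (3 - \<alpha>) + 2 powr (5 - \<alpha>) + btil_off \<alpha> N j
     else (let m = real (if i \<le> j then j - i else i - j) in
       - ((m + 2) powr (3 - \<alpha>)) + 4 * (m + 1) powr (3 - \<alpha>) - 6 * m powr (3 - \<alpha>)
       + 4 * (m - 1) powr (3 - \<alpha>) - (m - 2) powr (3 - \<alpha>)))"

definition B_h :: "real \<Rightarrow> nat \<Rightarrow> real mat" where
  "B_h \<alpha> N = mat (N - 1) (N - 1) (\<lambda>(i, j). b_entry \<alpha> N (i + 1) (j + 1))"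

definition kappa :: "real \<Rightarrow> real" where
  "kappa \<alpha> = - 1 / (2 * cos (\<alpha> * pi / 2))"

definition A_h :: "real \<Rightarrow> real \<Rightarrow> nat \<Rightarrow> real mat" where
  "A_h \<alpha> b N = (let h = b / real N in
     (kappa \<alpha> / (h powr (\<alpha> - 1) * Gamma (4 - \<alpha>))) \<cdot>\<^sub>m B_h \<alpha> N)"

definition diag_part :: "real mat \<Rightarrow> real mat" where
  "diag_part A = mat_diag (dim_row A) (\<lambda>i. A $$ (i, i))"

definition diag_inv :: "real mat \<Rightarrow> real mat" where
  "diag_inv D = mat_diag (dim_row D) (\<lambda>i. 1 / D $$ (i, i))"

definition lambda_max :: "real mat \<Rightarrow> real" where
  "lambda_max M = Max {k. eigenvalue M k}"

end

theory Submission
  imports Defs "Jordan_Normal_Form.Schur_Decomposition"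
begin


definition dd :: "real \<Rightarrow> nat \<Rightarrow> real \<Rightarrow> real" where
  "dd p k x = (\<Prod>i<k. (p - real i)) * x powr (p - real k)"

fun fdiff :: "nat \<Rightarrow> (real \<Rightarrow> real) \<Rightarrow> real \<Rightarrow> real" where
  "fdiff 0 g x = g x"
| "fdiff (Suc n) g x = fdiff n g (x + 1) - fdiff n g x"

lemma dd_deriv: assumes "x > 0" shows "(dd p k has_real_derivative dd p (Suc k) x) (at x)"
proof -
  have "((\<lambda>x. (\<Prod>i<k. (p - real i)) * x powr (p - real k)) has_real_derivative
      (\<Prod>i<k. (p - real i)) * ((p - real k) * x powr (p - real k - 1))) (at x)"
    using assms by (auto intro!: derivative_eq_intros)
  moreover have "(\<Prod>i<k. (p - real i)) * ((p - real k) * x powr (p - real k - 1)) = dd p (Suc k) x"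
    by (simp add: dd_def algebra_simps)
  ultimately show ?thesis unfolding dd_def[abs_def] by simp
qed

lemma fdiff_deriv: assumes "x > 0" shows "(fdiff n (dd p k) has_real_derivative fdiff n (dd p (Suc k)) x) (at x)"
  using assms
proof (induction n arbitrary: x)
  case 0 then show ?case by (simp add: dd_deriv)
next
  case (Suc n)
  have a: "(fdiff n (dd p k) has_real_derivative fdiff n (dd p (Suc k)) (x+1)) (at (x+1))"
    using Suc.IH[of "x+1"] Suc.prems by simp
  have c: "((\<lambda>x. x + 1) has_real_derivative 1) (at x)"
    by (auto intro!: derivative_eq_intros)
  have b: "((\<lambda>x. fdiff n (dd p k) (x + 1)) has_real_derivative fdiff n (dd p (Suc k)) (x+1)) (at x)"
    using DERIV_chain2[OF a c] by simp
  have "((\<lambda>x. fdiff n (dd p k) (x + 1) - fdiff n (dd p k) x) has_real_derivative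
      fdiff n (dd p (Suc k)) (x+1) - fdiff n (dd p (Suc k)) x) (at x)"
    by (rule DERIV_diff[OF b Suc.IH[OF Suc.prems]])
  then show ?case by simp
qed

lemma pos_incr: fixes g g' :: "real \<Rightarrow> real"
  assumes "0 < a" "a < b" "\<And>x. x > 0 \<Longrightarrow> (g has_real_derivative g' x) (at x)" "\<And>x. x > 0 \<Longrightarrow> g' x > 0"
  shows "g a < g b"
proof (rule DERIV_pos_imp_increasing[OF assms(2)])
  fix x assume "a \<le> x" "x \<le> b"
  then have "x > 0" using assms(1) by simp
  then show "\<exists>y. (g has_real_derivative y) (at x) \<and> 0 < y" using assms(3,4) by blast
qed

lemma fdiff_step: assumes "\<And>x. x > 0 \<Longrightarrow> fdiff n (dd p (Suc k)) x > 0"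
  and "0 < a" "a < b" shows "fdiff n (dd p k) a < fdiff n (dd p k) b"
  by (rule pos_incr[OF assms(2,3) fdiff_deriv assms(1)])

lemma fdiff_step': assumes "\<And>x. x > 0 \<Longrightarrow> fdiff n (dd p (Suc k)) x > 0"
  and "x > 0" shows "fdiff (Suc n) (dd p k) x > 0"
  using fdiff_step[OF assms(1), of x "x+1"] assms(2) by simp
lemma dd0: "dd p 0 x = x powr p" by (simp add: dd_def)
lemma dd1: "dd p 1 x = p * x powr (p - 1)" by (simp add: dd_def)
lemma dd2: "dd p 2 x = p * (p - 1) * x powr (p - 2)" by (simp add: dd_def eval_nat_numeral)
lemma dd3: "dd p 3 x = p * (p - 1) * (p - 2) * x powr (p - 3)" by (simp add: dd_def eval_nat_numeral)
lemma dd4: "dd p 4 x = p * (p - 1) * (p - 2) * (p - 3) * x powr (p - 4)" by (simp add: dd_def eval_nat_numeral)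

lemma cont_dd0: assumes "p > 0" shows "continuous_on {0..} (dd p 0)"
proof -
  have "continuous_on {0..} (\<lambda>x::real. x powr p)"
    using assms by (intro continuous_on_powr') (auto intro: continuous_intros)
  then show ?thesis by (simp add: dd0[abs_def])
qed

lemma cont_fdiff: assumes "continuous_on {0..} g" shows "continuous_on {0..} (fdiff n g)"
proof (induction n)
  case 0 then show ?case using assms by (simp add: fun_eq_iff[symmetric] )
next
  case (Suc n)
  have "continuous_on {0..} (\<lambda>x. fdiff n g (x + 1))"
  proof (rule continuous_on_compose2[OF Suc.IH])
    show "continuous_on {0..} (\<lambda>x::real. x + 1)" by (intro continuous_intros)
    show "(\<lambda>x::real. x + 1) ` {0..} \<subseteq> {0..}" by auto
  qed
  then have "continuous_on {0..} (\<lambda>x. fdiff n g (x + 1) - fdiff n g x)"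
    using Suc.IH by (intro continuous_on_diff)
  then show ?case by simp
qed

context fixes p :: real assumes p1: "1 < p" and p2: "p < 2"
begin

lemma dd4_pos: "x > 0 \<Longrightarrow> fdiff 0 (dd p 4) x > 0"
proof -
  assume x: "x > 0"
  have "p * (p - 1) * (p - 2) * (p - 3) > 0" using p1 p2
    by (intro mult_pos_pos mult_neg_neg) (auto intro: mult_pos_pos mult_pos_neg)
  then show ?thesis using x by (simp add: dd4)
qed

lemma d31: "x > 0 \<Longrightarrow> fdiff 1 (dd p 3) x > 0"
  using fdiff_step'[of 0 p 3] dd4_pos by (simp add: numeral_eq_Suc)
lemma d22: "x > 0 \<Longrightarrow> fdiff 2 (dd p 2) x > 0"
  using fdiff_step'[of 1 p 2] d31 by (simp add: numeral_eq_Suc)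
lemma d2_incr: "0 < a \<Longrightarrow> a < b \<Longrightarrow> fdiff 2 (dd p 1) a < fdiff 2 (dd p 1) b"
  using fdiff_step[of 2 p 1] d22 by (simp add: numeral_eq_Suc)
lemma d13: "x > 0 \<Longrightarrow> fdiff 3 (dd p 1) x > 0"
  using fdiff_step'[of 2 p 1] d22 by (simp add: numeral_eq_Suc)

lemma d40: assumes "0 \<le> a" shows "fdiff 3 (dd p 0) a < fdiff 3 (dd p 0) (a + 1)"
proof (rule DERIV_pos_imp_increasing_open[of a "a+1" "fdiff 3 (dd p 0)"])
  show "a < a + 1" by simp
  fix x assume "a < x" "x < a + 1"
  then have x: "x > 0" using assms by simp
  show "\<exists>y. (fdiff 3 (dd p 0) has_real_derivative y) (at x) \<and> 0 < y"
    using fdiff_deriv[OF x, of 3 p 0] d13[OF x] by (auto simp: numeral_eq_Suc)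
next
  have "continuous_on {0..} (fdiff 3 (dd p 0))" using cont_fdiff cont_dd0 p1 by simp
  then show "continuous_on {a..a+1} (fdiff 3 (dd p 0))"
    by (rule continuous_on_subset) (use assms in auto)
qed

lemma psi_main: assumes "0 \<le> y" shows "fdiff 3 (dd p 0) y < fdiff 2 (dd p 1) (y + 1)"
proof -
  define c where "c = fdiff 2 (dd p 1) (y + 1)"
  define V where "V s = s * c - fdiff 2 (dd p 0) s" for s
  have "V y < V (y + 1)"
  proof (rule DERIV_pos_imp_increasing_open[of y "y+1" V])
    show "y < y + 1" by simp
    fix x assume "y < x" "x < y + 1"
    then have x: "x > 0" and xl: "x < y + 1" using assms by auto
    have d1: "((\<lambda>s. s * c) has_real_derivative 1 * c) (at x)"
      by (auto intro!: derivative_eq_intros)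
    have "(V has_real_derivative (1 * c - fdiff 2 (dd p 1) x)) (at x)"
      unfolding V_def[abs_def]
      using DERIV_diff[OF d1 fdiff_deriv[OF x, of 2 p 0]] by simp
    moreover have "1 * c - fdiff 2 (dd p 1) x > 0" using d2_incr[OF x xl] c_def by simp
    ultimately show "\<exists>z. (V has_real_derivative z) (at x) \<and> 0 < z" by blast
  next
    have "continuous_on {0..} (fdiff 2 (dd p 0))" using cont_fdiff cont_dd0 p1 by simp
    then have "continuous_on {y..y+1} (fdiff 2 (dd p 0))"
      by (rule continuous_on_subset) (use assms in auto)
    then show "continuous_on {y..y+1} V" unfolding V_def[abs_def]
      by (intro continuous_intros)
  qed
  then show ?thesis by (simp add: V_def c_def numeral_eq_Suc algebra_simps)
qed

end
lemma incr_open: fixes g g' :: "real \<Rightarrow> real"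
  assumes "a < b" "\<And>x. a \<le> x \<Longrightarrow> x \<le> b \<Longrightarrow> (g has_real_derivative g' x) (at x)"
    "\<And>x. a < x \<Longrightarrow> x < b \<Longrightarrow> g' x > 0"
  shows "g a < g b"
proof (rule DERIV_pos_imp_increasing_open[of a b g])
  show "a < b" by fact
  fix x assume x: "a < x" "x < b"
  have "(g has_real_derivative g' x) (at x)" using assms(2)[of x] x by simp
  moreover have "g' x > 0" using assms(3)[OF x] .
  ultimately show "\<exists>y. (g has_real_derivative y) (at x) \<and> 0 < y" by blast
next
  show "continuous_on {a..b} g"
    by (rule DERIV_atLeastAtMost_imp_continuous_on) (use assms(2) in auto)
qed

context fixes p :: real assumes p1: "1 < p" and p2: "p < 2"
begin

lemma h_decr: assumes "0 < a" "a < b" shows "dd p 2 b < dd p 2 a"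
proof -
  have "(\<lambda>x. - dd p 2 x) a < (\<lambda>x. - dd p 2 x) b"
  proof (rule pos_incr[OF assms, of _ "\<lambda>x. - dd p 3 x"])
    fix x :: real assume x: "x > 0"
    show "((\<lambda>x. - dd p 2 x) has_real_derivative - dd p 3 x) (at x)"
      using DERIV_minus[OF dd_deriv[OF x, of p 2]] by (simp add: numeral_eq_Suc)
    have "p * (p - 1) * (p - 2) < 0" using p1 p2 by (intro mult_pos_neg) auto
    then show "- dd p 3 x > 0" using x unfolding dd3 by (simp add: mult_neg_pos)
  qed
  then show ?thesis by simp
qed

lemma g_tangent: assumes "0 < k" "k < u" shows "(u - k) * dd p 2 u < dd p 1 u - dd p 1 k"
proof -
  define c where "c = dd p 2 u"
  have "(\<lambda>v. dd p 1 v - v * c) k < (\<lambda>v. dd p 1 v - v * c) u"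
  proof (rule incr_open[OF assms(2), of _ "\<lambda>v. dd p 2 v - 1 * c"])
    fix x assume "k \<le> x" "x \<le> u"
    then have x: "x > 0" using assms by auto
    have d1: "((\<lambda>s. s * c) has_real_derivative 1 * c) (at x)"
      by (auto intro!: derivative_eq_intros)
    show "((\<lambda>v. dd p 1 v - v * c) has_real_derivative dd p 2 x - 1 * c) (at x)"
      using DERIV_diff[OF dd_deriv[OF x, of p 1] d1] by (simp add: numeral_eq_Suc)
  next
    fix x assume "k < x" "x < u"
    then show "dd p 2 x - 1 * c > 0" using h_decr[of x u] assms c_def by simp
  qed
  then show ?thesis by (simp add: c_def algebra_simps)
qed

lemma Loff_neg: assumes k: "0 < k"
  shows "- 2 * (dd p 0 (k + 1) - dd p 0 k) + (dd p 1 (k + 1) + dd p 1 k) < 0"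
proof -
  define phi where "phi t = 2 * (dd p 0 (k + t) - dd p 0 k) - t * (dd p 1 (k + t) + dd p 1 k)" for t
  have "phi 0 < phi 1"
  proof (rule incr_open[of 0 1 phi "\<lambda>t. dd p 1 (k + t) - dd p 1 k - t * dd p 2 (k + t)"])
    fix t :: real assume t: "0 \<le> t" "t \<le> 1"
    then have kt: "k + t > 0" using k by simp
    have e1: "((\<lambda>t. k + t) has_real_derivative 1) (at t)" by (auto intro!: derivative_eq_intros)
    have a0: "((\<lambda>t. dd p 0 (k + t)) has_real_derivative dd p 1 (k + t)) (at t)"
      using DERIV_chain2[OF dd_deriv[OF kt, of p 0] e1] by simp
    have a1: "((\<lambda>t. dd p 1 (k + t)) has_real_derivative dd p 2 (k + t)) (at t)"
      using DERIV_chain2[OF dd_deriv[OF kt, of p 1] e1] by (simp add: numeral_eq_Suc)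
    have "(phi has_real_derivative 2 * (dd p 1 (k + t) - 0) - (1 * (dd p 1 (k + t) + dd p 1 k) + t * (dd p 2 (k + t) + 0))) (at t)"
      unfolding phi_def[abs_def]
      using DERIV_diff[OF DERIV_cmult[OF DERIV_diff[OF a0 DERIV_const[of "dd p 0 k"]], of 2]
         DERIV_mult[OF DERIV_ident DERIV_add[OF a1 DERIV_const[of "dd p 1 k"]]]]
      by (simp add: mult.commute)
    then show "(phi has_real_derivative dd p 1 (k + t) - dd p 1 k - t * dd p 2 (k + t)) (at t)"
      by (simp add: algebra_simps)
  next
    fix t :: real assume t: "0 < t" "t < 1"
    show "dd p 1 (k + t) - dd p 1 k - t * dd p 2 (k + t) > 0"
      using g_tangent[of k "k + t"] k t by simp
  qed simp
  then show ?thesis by (simp add: phi_def)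
qed

end


definition Loff :: "real \<Rightarrow> real \<Rightarrow> real" where
  "Loff p k = - 2 * (dd p 0 (k + 1) - dd p 0 k) + (dd p 1 (k + 1) + dd p 1 k)"
definition Ld :: "real \<Rightarrow> real \<Rightarrow> real" where
  "Ld p k = 2 * (dd p 0 (k + 1) - 2 * dd p 1 k - dd p 0 (k - 1))"
definition Gz :: "real \<Rightarrow> int \<Rightarrow> real" where
  "Gz p d = real_of_int \<bar>d\<bar> powr p"
definition E :: "real \<Rightarrow> int \<Rightarrow> real" where
  "E p d = - (Gz p (d + 2) - 4 * Gz p (d + 1) + 6 * Gz p d - 4 * Gz p (d - 1) + Gz p (d - 2))"
definition T :: "real \<Rightarrow> int \<Rightarrow> real" where
  "T p d = - (Gz p (d + 2) - 3 * Gz p (d + 1) + 3 * Gz p d - Gz p (d - 1))"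
definition Phi :: "real \<Rightarrow> int \<Rightarrow> real" where
  "Phi p k = Gz p (k + 1) - 3 * Gz p k + 3 * Gz p (k - 1) - Gz p (k - 2)"

lemma dd1a: "dd (3 - a) 1 x = (3 - a) * x powr (2 - a)" by (simp add: dd_def)
lemma dd0a: "dd (3 - a) 0 x = x powr (3 - a)" by (simp add: dd_def)

lemma btil_off_eq: "btil_off a N i = Loff (3 - a) (real i) + Loff (3 - a) (real N - real i - 1)"
  unfolding btil_off_def Loff_def dd1a dd0a by (simp add: algebra_simps)

lemma btil_diag_eq: "btil_diag a N i = Ld (3 - a) (real i) + Ld (3 - a) (real N - real i)"
  unfolding btil_diag_def Ld_def dd1a dd0a by (simp add: algebra_simps)

lemma Gz_neg: "Gz p (- d) = Gz p d" by (simp add: Gz_def)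
lemma Gz_nat: "Gz p (int m) = real m powr p" by (simp add: Gz_def)

lemma E_T: "E p d = T p d - T p (d - 1)"
  by (simp add: E_def T_def algebra_simps)

lemma Gz_abs: "\<bar>x\<bar> = \<bar>y\<bar> \<Longrightarrow> Gz p x = Gz p y" by (simp add: Gz_def)

lemma E_sym: "E p (- d) = E p d"
proof -
  have "Gz p (- d + 2) = Gz p (d - 2)" "Gz p (- d + 1) = Gz p (d - 1)" "Gz p (- d) = Gz p d"
       "Gz p (- d - 1) = Gz p (d + 1)" "Gz p (- d - 2) = Gz p (d + 2)"
    by (rule Gz_abs; arith)+
  then show ?thesis unfolding E_def by simp
qed

lemma E_big: assumes "m \<ge> 2"
  shows "E p (int m) = - ((real m + 2) powr p) + 4 * (real m + 1) powr p - 6 * real m powr p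
       + 4 * (real m - 1) powr p - (real m - 2) powr p"
proof -
  have "Gz p (int m + 2) = (real m + 2) powr p" "Gz p (int m + 1) = (real m + 1) powr p"
    "Gz p (int m - 1) = (real m - 1) powr p" "Gz p (int m - 2) = (real m - 2) powr p"
    using assms by (simp_all add: Gz_def)
  then show ?thesis by (simp add: E_def Gz_nat)
qed

lemma two_powr4: "(2::real) powr (4 - a) = 2 * 2 powr (3 - a)"
proof - have "(2::real) powr (4 - a) = 2 powr (1 + (3 - a))" by simp
  also have "\<dots> = 2 * 2 powr (3 - a)" by (simp only: powr_add) simp
  finally show ?thesis . qed
lemma two_powr5: "(2::real) powr (5 - a) = 4 * 2 powr (3 - a)"
proof - have "(2::real) powr (5 - a) = 2 powr (2 + (3 - a))" by simp
  also have "\<dots> = 4 * 2 powr (3 - a)" by (simp only: powr_add) simp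
  finally show ?thesis . qed

lemma E0: "p > 0 \<Longrightarrow> E p 0 = 8 - 2 * 2 powr p"
  by (simp add: E_def Gz_def)
lemma E1: "p > 0 \<Longrightarrow> E p 1 = -7 - 3 powr p + 4 * 2 powr p"
  by (simp add: E_def Gz_def)

lemma entry_decomp:
  assumes a: "a < 3" and i: "i \<ge> 1" and j: "j \<ge> 1"
  shows "b_entry a N i j = E (3 - a) (int j - int i)
     + (if i = j then btil_diag a N i else 0)
     + (if j = i + 1 then btil_off a N i else 0)
     + (if i = j + 1 then btil_off a N j else 0)"
proof -
  have p: "3 - a > 0" using a by simp
  consider "i = j" | "j = i + 1" | "i = j + 1" | "i + 2 \<le> j" | "j + 2 \<le> i" by linarith
  then show ?thesis
  proof cases
    case 1 then show ?thesis using E0[OF p] by (simp add: b_entry_def two_powr4)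
  next
    case 2 then show ?thesis using E1[OF p] by (simp add: b_entry_def two_powr5)
  next
    case 3
    then have "int j - int i = - 1" by simp
    then show ?thesis using 3 E1[OF p] E_sym[of "3 - a" 1] by (simp add: b_entry_def two_powr5)
  next
    case 4
    then have m: "int j - int i = int (j - i)" "j - i \<ge> 2" "i \<le> j" by auto
    have r: "real (j - i) = real j - real i" using m by simp
    show ?thesis using 4 unfolding m(1) E_big[OF m(2)] by (simp add: b_entry_def Let_def m r)
  next
    case 5
    then have m: "int j - int i = - int (i - j)" "i - j \<ge> 2" "\<not> i \<le> j" by auto
    have r: "real (i - j) = real i - real j" using 5 by simp
    show ?thesis using 5 unfolding m(1) E_sym E_big[OF m(2)] by (simp add: b_entry_def Let_def m r)
  qed
qed


lemma row_sum:
  assumes a: "a < 3" and r: "r < N - 1"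
  shows "(\<Sum>c<N-1. b_entry a N (r+1) (c+1)) =
     T (3 - a) (int (N - 1) - int r - 1) - T (3 - a) (- int r - 1) + btil_diag a N (r+1)
     + (if r + 2 < N then btil_off a N (r+1) else 0) + (if r \<ge> 1 then btil_off a N r else 0)"
proof -
  let ?p = "3 - a"
  define n where "n = N - 1"
  have ent: "b_entry a N (r+1) (c+1) = E ?p (int c - int r)
     + (if c = r then btil_diag a N (r+1) else 0)
     + (if c = r + 1 then btil_off a N (r+1) else 0)
     + (if r = c + 1 then btil_off a N (c+1) else 0)" for c
    using entry_decomp[OF a, of "r+1" "c+1" N] by (simp add: algebra_simps)
  have s1: "(\<Sum>c<n. E ?p (int c - int r)) = T ?p (int n - int r - 1) - T ?p (- int r - 1)"
  proof -
    have "(\<Sum>c<n. E ?p (int c - int r)) = (\<Sum>c<n. T ?p (int (Suc c) - int r - 1) - T ?p (int c - int r - 1))"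
      by (intro sum.cong refl) (simp add: E_T algebra_simps)
    also have "\<dots> = T ?p (int n - int r - 1) - T ?p (int 0 - int r - 1)"
      by (rule sum_lessThan_telescope)
    finally show ?thesis by simp
  qed
  have s2: "(\<Sum>c<n. if c = r then btil_diag a N (r+1) else 0) = btil_diag a N (r+1)"
    using r n_def by simp
  have s3: "(\<Sum>c<n. if c = r + 1 then btil_off a N (r+1) else 0) = (if r + 2 < N then btil_off a N (r+1) else 0)"
    using r n_def by auto
  have s4: "(\<Sum>c<n. if r = c + 1 then btil_off a N (c+1) else 0) = (if r \<ge> 1 then btil_off a N r else 0)"
  proof (cases r)
    case 0 then show ?thesis by simp
  next
    case (Suc r')
    then have "(\<Sum>c<n. if r = c + 1 then btil_off a N (c+1) else 0) = (\<Sum>c<n. if c = r' then btil_off a N (c+1) else 0)"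
      by (intro sum.cong refl) auto
    also have "\<dots> = btil_off a N r" using Suc r n_def by simp
    finally show ?thesis using Suc by simp
  qed
  have "(\<Sum>c<n. b_entry a N (r+1) (c+1)) = (\<Sum>c<n. E ?p (int c - int r))
     + (\<Sum>c<n. if c = r then btil_diag a N (r+1) else 0)
     + (\<Sum>c<n. if c = r + 1 then btil_off a N (r+1) else 0)
     + (\<Sum>c<n. if r = c + 1 then btil_off a N (c+1) else 0)"
    unfolding ent by (simp only: sum.distrib)
  then have "(\<Sum>c<n. b_entry a N (r+1) (c+1)) =
     T (3 - a) (int n - int r - 1) - T (3 - a) (- int r - 1) + btil_diag a N (r+1)
     + (if r + 2 < N then btil_off a N (r+1) else 0) + (if r \<ge> 1 then btil_off a N r else 0)"
    using s1 s2 s3 s4 by linarith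
  then show ?thesis unfolding n_def .
qed


lemma fdiff2_exp: "fdiff 2 g y = g (y + 2) - 2 * g (y + 1) + g y"
  by (simp add: numeral_eq_Suc algebra_simps)
lemma fdiff3_exp: "fdiff 3 g y = g (y + 3) - 3 * g (y + 2) + 3 * g (y + 1) - g y"
  by (simp add: numeral_eq_Suc algebra_simps)
lemma fdiff4_exp: "fdiff 4 g y = g (y + 4) - 4 * g (y + 3) + 6 * g (y + 2) - 4 * g (y + 1) + g y"
  by (simp add: numeral_eq_Suc algebra_simps)

lemma T_left: "l \<ge> 1 \<Longrightarrow> T p (int l - 1) = - Phi p (int l)"
  by (simp add: T_def Phi_def algebra_simps)

lemma T_right: "T p (- int r - 1) = Phi p (int r + 1)"
proof -
  have "Gz p (- int r - 1 + 2) = Gz p (int r + 1 - 2)" "Gz p (- int r - 1 + 1) = Gz p (int r + 1 - 1)"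
       "Gz p (- int r - 1) = Gz p (int r + 1)" "Gz p (- int r - 1 - 1) = Gz p (int r + 1 + 1)"
    by (rule Gz_abs; arith)+
  then show ?thesis unfolding T_def Phi_def by simp
qed

lemma Phi_big: assumes "k \<ge> 2" shows "Phi p (int k) = fdiff 3 (dd p 0) (real k - 2)"
proof -
  have "Gz p (int k + 1) = (real k + 1) powr p" "Gz p (int k - 1) = (real k - 1) powr p"
    "Gz p (int k - 2) = (real k - 2) powr p"
    using assms by (simp_all add: Gz_def)
  then show ?thesis unfolding Phi_def fdiff3_exp by (simp add: dd0 Gz_nat algebra_simps)
qed

lemma Phi_one: "p > 0 \<Longrightarrow> Phi p 1 = 2 powr p - 4"
  by (simp add: Phi_def Gz_def)

lemma dd1S: "dd p (Suc 0) x = p * x powr (p - 1)" by (simp add: dd_def)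

lemma Ld_Loff: "Ld p k + Loff p k + Loff p (k - 1) = dd p 1 (k + 1) - 2 * dd p 1 k + dd p 1 (k - 1)"
  by (simp add: Ld_def Loff_def algebra_simps)

context fixes p :: real assumes p1: "1 < p" and p2: "p < 2"
begin

lemma psi_pos: assumes k: "k \<ge> 1"
  shows "- Phi p (int k) + (dd p 1 (real k + 1) - 2 * dd p 1 (real k) + dd p 1 (real k - 1)) > 0"
proof (cases "k = 1")
  case True
  have e: "2 powr p = 2 * 2 powr (p - 1)"
  proof - have "(2::real) powr p = 2 powr (1 + (p - 1))" by simp
    also have "\<dots> = 2 * 2 powr (p - 1)" by (simp only: powr_add) simp
    finally show ?thesis . qed
  have l: "2 powr (p - 1) < (2::real) powr 1" using p2 by (intro powr_less_mono) auto
  have "0 < (2 - p) * (2 - 2 powr (p - 1))" using l p2 by (intro mult_pos_pos) auto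
  then show ?thesis using True p1 Phi_one[of p] e by (simp add: dd1 dd1S algebra_simps)
next
  case False
  then have k2: "k \<ge> 2" using k by simp
  have "fdiff 3 (dd p 0) (real k - 2) < fdiff 2 (dd p 1) (real k - 2 + 1)"
    using psi_main[OF p1 p2, of "real k - 2"] k2 by simp
  then show ?thesis unfolding Phi_big[OF k2] fdiff2_exp by (simp add: algebra_simps)
qed

lemma Loff_nonpos: "x \<ge> 0 \<Longrightarrow> Loff p x \<le> 0"
proof (cases "x = 0")
  case True then show ?thesis using p1 p2 by (simp add: Loff_def dd0 dd1 dd1S)
next
  case False
  assume "x \<ge> 0" then have "x > 0" using False by simp
  then show ?thesis using Loff_neg[OF p1 p2] by (simp add: Loff_def less_imp_le)
qed

lemma E_big_neg: assumes "m \<ge> 2" shows "E p (int m) < 0"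
proof -
  have "fdiff 3 (dd p 0) (real m - 2) < fdiff 3 (dd p 0) (real m - 2 + 1)"
    using d40[OF p1 p2, of "real m - 2"] assms by simp
  then have "fdiff 4 (dd p 0) (real m - 2) > 0" by (simp add: numeral_eq_Suc)
  then show ?thesis unfolding fdiff4_exp E_big[OF assms] by (simp add: dd0 algebra_simps)
qed

end

lemma cp_nonpos: assumes "1 < a" "a < 2" shows "-7 - 3 powr (3 - a) + 4 * 2 powr (3 - a) \<le> (0::real)"
proof -
  define s where "s = a - 1"
  have s: "0 < s" "s < 1" using assms s_def by auto
  have e3: "(3::real) powr (3 - a) = 9 * 3 powr (- s)"
  proof - have "(3::real) powr (3 - a) = 3 powr (2 + (- s))" using s_def by simp
    also have "\<dots> = 9 * 3 powr (- s)" by (simp only: powr_add) simp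
    finally show ?thesis . qed
  have e2: "(2::real) powr (3 - a) = 4 * 2 powr (- s)"
  proof - have "(2::real) powr (3 - a) = 2 powr (2 + (- s))" using s_def by simp
    also have "\<dots> = 4 * 2 powr (- s)" by (simp only: powr_add) simp
    finally show ?thesis . qed
  have y: "(3 powr (- s)) powr (9/16) * 1 powr (7/16) \<le> 9/16 * 3 powr (- s) + 7/16 * (1::real)"
    by (rule Youngs_inequality_0) auto
  have y1: "(3 powr (- s)) powr (9/16) = (19683::real) powr (- s / 16 :: real)"
  proof -
    have "(3 powr (- s)) powr (9/16) = (3::real) powr (9 * (- s / 16))" by (simp add: powr_powr algebra_simps)
    also have "\<dots> = (3 powr 9) powr (- s / 16)" by (simp only: powr_powr)
    also have "(3::real) powr 9 = 19683" by simp
    finally show ?thesis by simp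
  qed
  have y2: "(2::real) powr (- s) = 65536 powr (- s / 16)"
  proof -
    have "(2::real) powr (- s) = 2 powr (16 * (- s / 16))" by simp
    also have "\<dots> = (2 powr 16) powr (- s / 16)" by (simp only: powr_powr)
    also have "(2::real) powr 16 = 65536" by simp
    finally show ?thesis by simp
  qed
  have m: "(65536::real) powr (- s / 16) \<le> 19683 powr (- s / 16)"
    using s by (intro powr_mono2') auto
  have "16 * 2 powr (- s) \<le> 9 * 3 powr (- s) + (7::real)"
    using y m unfolding y1 y2 by simp
  then show ?thesis unfolding e3 e2 by simp
qed


lemma row_pos:
  assumes a1: "1 < a" and a2: "a < 2" and r: "r < N - 1"
  shows "(\<Sum>c<N-1. b_entry a N (r+1) (c+1)) > 0"
proof -
  define p where "p = 3 - a"
  have p1: "1 < p" and p2: "p < 2" using a1 a2 p_def by auto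
  define l where "l = N - 1 - r"
  have l1: "l \<ge> 1" using r l_def by simp
  define x where "x = real (r + 1)"
  define y where "y = real l"
  have NI: "real N - real (r + 1) = y" using r l_def y_def by simp
  have Tl: "T p (int (N - 1) - int r - 1) = - Phi p (int l)"
  proof -
    have "int (N - 1) - int r - 1 = int l - 1" using r l_def by simp
    then show ?thesis using T_left[OF l1, of p] by simp
  qed
  have Tr: "T p (- int r - 1) = Phi p (int (r + 1))" using T_right[of p r] by (simp add: add.commute)
  have bd: "btil_diag a N (r+1) = Ld p x + Ld p y"
    using btil_diag_eq[of a N "r+1"] NI x_def p_def by simp
  have bo1: "btil_off a N (r+1) = Loff p x + Loff p (y - 1)"
  proof -
    have "real N - real (r + 1) - 1 = y - 1" using NI by simp
    then show ?thesis using btil_off_eq[of a N "r+1"] x_def p_def by metis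
  qed
  have bo2: "btil_off a N r = Loff p (x - 1) + Loff p y"
  proof -
    have "real N - real r - 1 = y" using NI by simp
    moreover have "real r = x - 1" using x_def by simp
    ultimately show ?thesis using btil_off_eq[of a N r] p_def by simp
  qed
  have psiI: "- Phi p (int (r + 1)) + (dd p 1 (x + 1) - 2 * dd p 1 x + dd p 1 (x - 1)) > 0"
    using psi_pos[OF p1 p2, of "r + 1"] x_def by simp
  have psil: "- Phi p (int l) + (dd p 1 (y + 1) - 2 * dd p 1 y + dd p 1 (y - 1)) > 0"
    using psi_pos[OF p1 p2 l1] y_def by simp
  have LI: "Ld p x + Loff p x + Loff p (x - 1) = dd p 1 (x + 1) - 2 * dd p 1 x + dd p 1 (x - 1)"
    by (rule Ld_Loff)
  have Ll: "Ld p y + Loff p y + Loff p (y - 1) = dd p 1 (y + 1) - 2 * dd p 1 y + dd p 1 (y - 1)"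
    by (rule Ld_Loff)
  have n1: "Loff p x \<le> 0" "Loff p (x - 1) \<le> 0" "Loff p y \<le> 0" "Loff p (y - 1) \<le> 0"
    using Loff_nonpos[OF p1 p2] x_def y_def l1 by auto
  have c1: "r + 2 < N \<longleftrightarrow> l \<ge> 2" using r l_def by auto
  have RS: "(\<Sum>c<N-1. b_entry a N (r+1) (c+1)) =
     - Phi p (int l) - Phi p (int (r + 1)) + Ld p x + Ld p y
     + (if l \<ge> 2 then Loff p x + Loff p (y - 1) else 0) + (if r \<ge> 1 then Loff p (x - 1) + Loff p y else 0)"
    using row_sum[of a r N] a2 r unfolding p_def[symmetric] Tl Tr bd bo1 bo2 c1 by simp
  show ?thesis unfolding RS using psiI psil LI Ll n1 by (simp split: if_split) linarith?
qed

lemma offdiag_nonpos: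
  assumes a1: "1 < a" and a2: "a < 2" and i: "1 \<le> i" "i \<le> N - 1" and j: "1 \<le> j" "j \<le> N - 1" and ij: "i \<noteq> j"
  shows "b_entry a N i j \<le> 0"
proof -
  define p where "p = 3 - a"
  have p1: "1 < p" and p2: "p < 2" using a1 a2 p_def by auto
  have dec: "b_entry a N i j = E p (int j - int i)
     + (if j = i + 1 then btil_off a N i else 0)
     + (if i = j + 1 then btil_off a N j else 0)"
    using entry_decomp[of a i j N] a2 i j ij p_def by simp
  consider "j = i + 1" | "i = j + 1" | "i + 2 \<le> j" | "j + 2 \<le> i" using ij by linarith
  then show ?thesis
  proof cases
    case 1
    have "E p 1 \<le> 0" using cp_nonpos[OF a1 a2] E1[of p] p1 p_def by simp
    moreover have "Loff p (real i) \<le> 0" "Loff p (real N - real i - 1) \<le> 0"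
      using Loff_nonpos[OF p1 p2] i 1 j by auto
    ultimately show ?thesis using dec 1 btil_off_eq[of a N i] p_def by simp
  next
    case 2
    have "E p (-1) \<le> 0" using cp_nonpos[OF a1 a2] E1[of p] E_sym[of p 1] p1 p_def by simp
    moreover have "Loff p (real j) \<le> 0" "Loff p (real N - real j - 1) \<le> 0"
      using Loff_nonpos[OF p1 p2] i 2 j by auto
    moreover have "int j - int i = -1" using 2 by simp
    ultimately show ?thesis using dec 2 btil_off_eq[of a N j] p_def by simp
  next
    case 3
    then have "int j - int i = int (j - i)" "j - i \<ge> 2" by auto
    then show ?thesis using dec 3 E_big_neg[OF p1 p2, of "j - i"] by simp
  next
    case 4
    then have "int j - int i = - int (i - j)" "i - j \<ge> 2" by auto
    moreover have "E p (int j - int i) = E p (int i - int j)" using E_sym[of p "int i - int j"] by simp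
    ultimately show ?thesis using dec 4 E_big_neg[OF p1 p2, of "i - j"] by simp
  qed
qed



definition mtr :: "'a::comm_ring_1 mat \<Rightarrow> 'a" where
  "mtr X = (\<Sum>i<dim_row X. X $$ (i, i))"

lemma mtr_comm: assumes A: "A \<in> carrier_mat n m" and B: "B \<in> carrier_mat m n"
  shows "mtr (A * B) = mtr (B * A)"
proof -
  have "mtr (A * B) = (\<Sum>i<n. \<Sum>k<m. A $$ (i, k) * B $$ (k, i))"
    using A B by (simp add: mtr_def scalar_prod_def atLeast0LessThan)
  also have "\<dots> = (\<Sum>k<m. \<Sum>i<n. B $$ (k, i) * A $$ (i, k))"
    by (subst sum.swap) (simp add: mult.commute)
  also have "\<dots> = mtr (B * A)"
    using A B by (simp add: mtr_def scalar_prod_def atLeast0LessThan)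
  finally show ?thesis .
qed

lemma mtr_similar: assumes "similar_mat_wit A U P Q" and A: "A \<in> carrier_mat n n"
  shows "mtr A = mtr U"
proof -
  from assms have U: "U \<in> carrier_mat n n" and P: "P \<in> carrier_mat n n" and Q: "Q \<in> carrier_mat n n"
    and QP: "Q * P = 1\<^sub>m n" and e: "A = P * U * Q"
    unfolding similar_mat_wit_def Let_def by auto
  have "mtr A = mtr ((P * U) * Q)" using e by simp
  also have "\<dots> = mtr (Q * (P * U))" using P U Q by (intro mtr_comm[of _ n n]) auto
  also have "Q * (P * U) = (Q * P) * U" using P U Q by (simp add: assoc_mult_mat)
  also have "\<dots> = U" using QP U by simp
  finally show ?thesis .
qed

lemma mtr_diag_mat: "mtr U = sum_list (diag_mat U)"
  by (simp add: mtr_def diag_mat_def sum_set_upt_conv_sum_list_nat[symmetric] atLeast0LessThan)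

lemma sum_list_ge: fixes xs :: "real list"
  assumes "sum_list xs \<ge> real (length xs)" "xs \<noteq> []" shows "\<exists>x\<in>set xs. x \<ge> 1"
proof (rule ccontr)
  assume "\<not> ?thesis"
  then have "\<forall>x\<in>set xs. x < 1" by auto
  then have "sum_list xs < real (length xs)" using assms(2)
  proof (induction xs)
    case Nil then show ?case by simp
  next
    case (Cons y ys) then show ?case by (cases "ys = []") auto
  qed
  then show False using assms(1) by simp
qed

lemma ex_ev_ge1:
  fixes Mm :: "real mat"
  assumes M: "Mm \<in> carrier_mat n n" and n: "n \<ge> 1" and d: "\<And>i. i < n \<Longrightarrow> Mm $$ (i, i) = 1"
  and re: "\<And>z. eigenvalue (map_mat complex_of_real Mm) z \<Longrightarrow> Im z = 0"
  shows "\<exists>k \<ge> 1. eigenvalue Mm k"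
proof -
  let ?Mc = "map_mat complex_of_real Mm"
  have Mc: "?Mc \<in> carrier_mat n n" using M by simp
  obtain as where cp: "char_poly ?Mc = (\<Prod>a\<leftarrow>as. [:- a, 1:])" and len: "length as = n"
    using char_poly_factorized[OF Mc] by blast
  obtain U P Q where sch: "schur_decomposition ?Mc as = (U, P, Q)" by (cases "schur_decomposition ?Mc as") auto
  from schur_decomposition[OF Mc cp sch] have sim: "similar_mat_wit ?Mc U P Q" and dU: "diag_mat U = as" by auto
  have "mtr ?Mc = sum_list as" using mtr_similar[OF sim Mc] mtr_diag_mat[of U] dU by simp
  moreover have "mtr ?Mc = of_nat n" using M d by (simp add: mtr_def)
  ultimately have sa: "sum_list as = of_nat n" by simp
  have root: "eigenvalue ?Mc a" if "a \<in> set as" for a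
  proof -
    have "poly (char_poly ?Mc) a = 0" unfolding cp poly_prod_list
      using that by (induction as) auto
    then show ?thesis using eigenvalue_root_char_poly[OF Mc] by simp
  qed
  have "sum_list (map Re as) = Re (sum_list as)" by (induction as) auto
  then have "sum_list (map Re as) \<ge> real (length (map Re as))" using sa len by simp
  moreover have "map Re as \<noteq> []" using len n by auto
  ultimately obtain x where "x \<in> set (map Re as)" "x \<ge> 1" using sum_list_ge by blast
  then obtain a where a: "a \<in> set as" "Re a \<ge> 1" by auto
  have ev: "eigenvalue ?Mc a" using root[OF a(1)] .
  have "Im a = 0" using re[OF ev] .
  then have aa: "a = complex_of_real (Re a)" by (simp add: complex_eq_iff)
  have "poly (char_poly ?Mc) a = 0" using ev eigenvalue_root_char_poly[OF Mc] by simp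
  moreover have cpe: "char_poly ?Mc = map_poly complex_of_real (char_poly Mm)"
    by (rule of_real_hom.char_poly_hom[OF M])
  ultimately have "poly (map_poly complex_of_real (char_poly Mm)) a = 0"
    by metis
  then have "complex_of_real (poly (char_poly Mm) (Re a)) = 0"
    using aa of_real_hom.poly_map_poly by metis
  then have "poly (char_poly Mm) (Re a) = 0" by simp
  then have "eigenvalue Mm (Re a)" using eigenvalue_root_char_poly[OF M] by simp
  then show ?thesis using a(2) by blast
qed


lemma gersh:
  fixes Bm :: "real mat"
  assumes pos: "\<And>i. i < n \<Longrightarrow> Bm $$ (i, i) > 0"
  and dom: "\<And>i. i < n \<Longrightarrow> (\<Sum>j\<in>{..<n} - {i}. \<bar>Bm $$ (i, j)\<bar>) < Bm $$ (i, i)"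
  and ev: "eigenvalue (mat n n (\<lambda>(i, j). Bm $$ (i, j) / Bm $$ (i, i))) k"
  shows "k < 2"
proof -
  let ?M = "mat n n (\<lambda>(i, j). Bm $$ (i, j) / Bm $$ (i, i))"
  obtain v where v: "v \<in> carrier_vec n" "v \<noteq> 0\<^sub>v n" "?M *\<^sub>v v = k \<cdot>\<^sub>v v"
    using ev unfolding eigenvalue_def eigenvector_def by auto
  have "n \<noteq> 0" using v by auto
  define S where "S = (\<lambda>j. \<bar>v $ j\<bar>) ` {..<n}"
  have "finite S" "S \<noteq> {}" using \<open>n \<noteq> 0\<close> S_def by auto
  then have "Max S \<in> S" by simp
  then obtain i where i: "i < n" "\<bar>v $ i\<bar> = Max S" using S_def by auto
  have mx: "\<bar>v $ j\<bar> \<le> \<bar>v $ i\<bar>" if "j < n" for j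
    using i \<open>finite S\<close> that S_def by auto
  have vi: "v $ i \<noteq> 0"
  proof
    assume "v $ i = 0"
    then have "\<And>j. j < n \<Longrightarrow> v $ j = 0" using mx by fastforce
    then have "v = 0\<^sub>v n" using v(1) by (intro eq_vecI) auto
    then show False using v(2) by simp
  qed
  have "(?M *\<^sub>v v) $ i = k * v $ i" using v(3) i v(1) by simp
  then have "(\<Sum>j<n. Bm $$ (i, j) / Bm $$ (i, i) * v $ j) = k * v $ i"
    using i v(1) by (simp add: scalar_prod_def atLeast0LessThan)
  moreover have "(\<Sum>j<n. Bm $$ (i, j) * v $ j) = Bm $$ (i, i) * (\<Sum>j<n. Bm $$ (i, j) / Bm $$ (i, i) * v $ j)"
    using pos[OF i(1)] by (simp add: sum_distrib_left)
  ultimately have "(\<Sum>j<n. Bm $$ (i, j) * v $ j) = k * Bm $$ (i, i) * v $ i"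
    by simp
  moreover have "(\<Sum>j<n. Bm $$ (i, j) * v $ j) = Bm $$ (i, i) * v $ i + (\<Sum>j\<in>{..<n} - {i}. Bm $$ (i, j) * v $ j)"
    using i by (subst sum.remove[of _ i]) auto
  ultimately have eq: "(k - 1) * Bm $$ (i, i) * v $ i = (\<Sum>j\<in>{..<n} - {i}. Bm $$ (i, j) * v $ j)"
    by (simp add: algebra_simps)
  have "\<bar>(k - 1) * Bm $$ (i, i) * v $ i\<bar> = \<bar>k - 1\<bar> * Bm $$ (i, i) * \<bar>v $ i\<bar>"
    using pos[OF i(1)] by (simp add: abs_mult)
  then have "\<bar>k - 1\<bar> * Bm $$ (i, i) * \<bar>v $ i\<bar> = \<bar>\<Sum>j\<in>{..<n} - {i}. Bm $$ (i, j) * v $ j\<bar>"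
    unfolding eq by simp
  also have "\<dots> \<le> (\<Sum>j\<in>{..<n} - {i}. \<bar>Bm $$ (i, j)\<bar> * \<bar>v $ j\<bar>)"
    by (rule order_trans[OF sum_abs]) (simp add: abs_mult)
  also have "\<dots> \<le> (\<Sum>j\<in>{..<n} - {i}. \<bar>Bm $$ (i, j)\<bar> * \<bar>v $ i\<bar>)"
    by (intro sum_mono mult_left_mono) (auto intro: mx)
  also have "\<dots> = (\<Sum>j\<in>{..<n} - {i}. \<bar>Bm $$ (i, j)\<bar>) * \<bar>v $ i\<bar>"
    by (simp add: sum_distrib_right)
  also have "\<dots> < Bm $$ (i, i) * \<bar>v $ i\<bar>"
    using dom[OF i(1)] vi by simp
  finally have "\<bar>k - 1\<bar> * (Bm $$ (i, i) * \<bar>v $ i\<bar>) < 1 * (Bm $$ (i, i) * \<bar>v $ i\<bar>)"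
    by (simp add: mult.assoc)
  moreover have "0 \<le> Bm $$ (i, i) * \<bar>v $ i\<bar>" using pos[OF i(1)] by simp
  ultimately have "\<bar>k - 1\<bar> < 1" by (rule mult_right_less_imp_less)
  then show ?thesis by simp
qed

lemma real_ev:
  fixes Bm :: "real mat"
  assumes pos: "\<And>i. i < n \<Longrightarrow> Bm $$ (i, i) > 0"
  and sym: "\<And>i j. i < n \<Longrightarrow> j < n \<Longrightarrow> Bm $$ (i, j) = Bm $$ (j, i)"
  and ev: "eigenvalue (map_mat complex_of_real (mat n n (\<lambda>(i, j). Bm $$ (i, j) / Bm $$ (i, i)))) z"
  shows "Im z = 0"
proof -
  let ?M = "map_mat complex_of_real (mat n n (\<lambda>(i, j). Bm $$ (i, j) / Bm $$ (i, i)))"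
  let ?b = "\<lambda>i j. complex_of_real (Bm $$ (i, j))"
  obtain v where v: "v \<in> carrier_vec n" "v \<noteq> 0\<^sub>v n" "?M *\<^sub>v v = z \<cdot>\<^sub>v v"
    using ev unfolding eigenvalue_def eigenvector_def by auto
  have row: "(\<Sum>j<n. ?b i j * v $ j) = z * ?b i i * v $ i" if i: "i < n" for i
  proof -
    have "(?M *\<^sub>v v) $ i = z * v $ i" using v(3) i v(1) by simp
    then have "(\<Sum>j<n. complex_of_real (Bm $$ (i, j) / Bm $$ (i, i)) * v $ j) = z * v $ i"
      using i v(1) by (simp add: scalar_prod_def atLeast0LessThan)
    moreover have "(\<Sum>j<n. ?b i j * v $ j) = ?b i i * (\<Sum>j<n. complex_of_real (Bm $$ (i, j) / Bm $$ (i, i)) * v $ j)"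
      using pos[OF i] by (simp add: sum_distrib_left)
    ultimately show ?thesis by simp
  qed
  define S where "S = (\<Sum>i<n. \<Sum>j<n. ?b i j * cnj (v $ i) * v $ j)"
  define R where "R = (\<Sum>i<n. Bm $$ (i, i) * (cmod (v $ i))\<^sup>2)"
  have SR: "S = z * complex_of_real R"
  proof -
    have "S = (\<Sum>i<n. cnj (v $ i) * (\<Sum>j<n. ?b i j * v $ j))"
      unfolding S_def by (simp add: sum_distrib_left mult_ac)
    also have "\<dots> = (\<Sum>i<n. cnj (v $ i) * (z * ?b i i * v $ i))"
      by (intro sum.cong refl) (simp add: row)
    also have "\<dots> = z * (\<Sum>i<n. ?b i i * (cnj (v $ i) * v $ i))"
      by (simp add: sum_distrib_left mult_ac)
    also have "(\<Sum>i<n. ?b i i * (cnj (v $ i) * v $ i)) = complex_of_real R"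
    proof -
      have "?b i i * (cnj (v $ i) * v $ i) = complex_of_real (Bm $$ (i, i) * (cmod (v $ i))\<^sup>2)" for i
        using complex_norm_square[of "v $ i"] by (simp add: mult.commute)
      then show ?thesis unfolding R_def of_real_sum by (intro sum.cong refl) presburger
    qed
    finally show ?thesis .
  qed
  have cS: "cnj S = S"
  proof -
    have "cnj S = (\<Sum>i<n. \<Sum>j<n. ?b i j * v $ i * cnj (v $ j))"
      unfolding S_def by simp
    also have "\<dots> = (\<Sum>j<n. \<Sum>i<n. ?b i j * v $ i * cnj (v $ j))"
      by (rule sum.swap)
    also have "\<dots> = S"
      unfolding S_def using sym by (intro sum.cong refl) (simp add: mult_ac)
    finally show ?thesis .
  qed
  have "R > 0"
  proof -
    have "n \<noteq> 0" using v by auto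
    obtain i where i: "i < n" "v $ i \<noteq> 0"
    proof (rule ccontr)
      assume "\<not> thesis"
      then have "\<And>i. i < n \<Longrightarrow> v $ i = 0" using that by blast
      then have "v = 0\<^sub>v n" using v(1) by (intro eq_vecI) auto
      then show False using v(2) by simp
    qed
    have nn: "0 \<le> Bm $$ (x, x) * (cmod (v $ x))\<^sup>2" if "x < n" for x
      using pos[OF that] by simp
    have "0 < Bm $$ (i, i) * (cmod (v $ i))\<^sup>2" using pos[OF i(1)] i(2) by simp
    also have "\<dots> \<le> R" unfolding R_def
      by (rule member_le_sum) (use i nn in auto)
    finally show ?thesis .
  qed
  have "cnj z * complex_of_real R = z * complex_of_real R"
  proof -
    have "cnj S = cnj z * complex_of_real R" using SR by simp
    then show ?thesis using cS SR by simp
  qed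
  then have "cnj z = z" using \<open>R > 0\<close> by simp
  then show ?thesis by (simp add: complex_eq_iff)
qed



lemma b_entry_sym: "b_entry a N i j = b_entry a N j i"
  unfolding b_entry_def Let_def by auto

lemma kappa_pos: assumes "1 < a" "a < 2" shows "kappa a > 0"
proof -
  have "0 < cos (pi - a * pi / 2)"
    using assms pi_gt_zero by (intro cos_gt_zero) (auto simp: field_simps)
  then have "cos (a * pi / 2) < 0" by simp
  then show ?thesis unfolding kappa_def by (simp add: divide_neg_neg)
qed

theorem lemma3p4:
  fixes \<alpha> b :: real and N :: nat
  assumes "1 < \<alpha>" "\<alpha> < 2" "b > 0" "N \<ge> 2"
  shows "1 \<le> lambda_max (diag_inv (diag_part (A_h \<alpha> b N)) * A_h \<alpha> b N)
       \<and> lambda_max (diag_inv (diag_part (A_h \<alpha> b N)) * A_h \<alpha> b N) < 2"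
proof -
  define n where "n = N - 1"
  have n1: "n \<ge> 1" using assms(4) n_def by simp
  define Bm where "Bm = B_h \<alpha> N"
  have Bc: "Bm \<in> carrier_mat n n" unfolding Bm_def B_h_def n_def by simp
  have Bij: "Bm $$ (i, j) = b_entry \<alpha> N (i + 1) (j + 1)" if "i < n" "j < n" for i j
    using that unfolding Bm_def B_h_def n_def by simp
  define c where "c = kappa \<alpha> / ((b / real N) powr (\<alpha> - 1) * Gamma (4 - \<alpha>))"
  have c: "c > 0" unfolding c_def using kappa_pos[OF assms(1,2)] assms
    by (intro divide_pos_pos mult_pos_pos) auto
  have A: "A_h \<alpha> b N = c \<cdot>\<^sub>m Bm" unfolding A_h_def Let_def c_def Bm_def by simp
  have sym: "Bm $$ (i, j) = Bm $$ (j, i)" if "i < n" "j < n" for i j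
    using that Bij b_entry_sym by simp
  have off: "Bm $$ (i, j) \<le> 0" if "i < n" "j < n" "i \<noteq> j" for i j
    using that Bij offdiag_nonpos[OF assms(1,2), of "i+1" N "j+1"] n_def by simp
  have rs: "(\<Sum>j<n. Bm $$ (i, j)) > 0" if "i < n" for i
  proof -
    have "(\<Sum>j<n. Bm $$ (i, j)) = (\<Sum>j<N-1. b_entry \<alpha> N (i + 1) (j + 1))"
      using that Bij n_def by (intro sum.cong) auto
    then show ?thesis using row_pos[OF assms(1,2), of i N] that n_def by simp
  qed
  have dom: "(\<Sum>j\<in>{..<n} - {i}. \<bar>Bm $$ (i, j)\<bar>) < Bm $$ (i, i)" if i: "i < n" for i
  proof -
    have "(\<Sum>j<n. Bm $$ (i, j)) = Bm $$ (i, i) + (\<Sum>j\<in>{..<n} - {i}. Bm $$ (i, j))"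
      using i by (subst sum.remove[of _ i]) auto
    moreover have "(\<Sum>j\<in>{..<n} - {i}. \<bar>Bm $$ (i, j)\<bar>) = - (\<Sum>j\<in>{..<n} - {i}. Bm $$ (i, j))"
      using off i by (simp add: sum_negf[symmetric] abs_of_nonpos)
    ultimately show ?thesis using rs[OF i] by simp
  qed
  have pos: "Bm $$ (i, i) > 0" if "i < n" for i
  proof -
    have "0 \<le> (\<Sum>j\<in>{..<n} - {i}. \<bar>Bm $$ (i, j)\<bar>)" by (rule sum_nonneg) simp
    then show ?thesis using dom[OF that] by linarith
  qed
  define Mm where "Mm = mat n n (\<lambda>(i, j). Bm $$ (i, j) / Bm $$ (i, i))"
  have Ac: "A_h \<alpha> b N \<in> carrier_mat n n" using A Bc by simp
  have M: "diag_inv (diag_part (A_h \<alpha> b N)) * A_h \<alpha> b N = Mm"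
  proof -
    have dp: "diag_inv (diag_part (A_h \<alpha> b N)) = mat_diag n (\<lambda>i. 1 / (c * Bm $$ (i, i)))"
      unfolding diag_inv_def diag_part_def using Ac A Bc
      by (intro eq_matI) (auto simp: mat_diag_def)
    show ?thesis unfolding dp mat_diag_mult_left[OF Ac] Mm_def
      using A Bc c pos by (intro eq_matI) auto
  qed
  have Mc: "Mm \<in> carrier_mat n n" unfolding Mm_def by simp
  have ub: "k < 2" if "eigenvalue Mm k" for k
    using gersh[of n Bm k] pos dom that unfolding Mm_def by blast
  have "\<exists>k \<ge> 1. eigenvalue Mm k"
  proof (rule ex_ev_ge1[OF Mc n1])
    show "Mm $$ (i, i) = 1" if "i < n" for i using that pos[OF that] unfolding Mm_def by simp
    show "Im z = 0" if "eigenvalue (map_mat complex_of_real Mm) z" for z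
      using real_ev[of n Bm z] pos sym that unfolding Mm_def by blast
  qed
  then obtain k where k: "k \<ge> 1" "eigenvalue Mm k" by blast
  have fin: "finite {k. eigenvalue Mm k}"
  proof -
    have "char_poly Mm \<noteq> 0" using degree_monic_char_poly[OF Mc] by auto
    then have "finite {x. poly (char_poly Mm) x = 0}" by (rule poly_roots_finite)
    then show ?thesis using eigenvalue_root_char_poly[OF Mc] by simp
  qed
  have ne: "{k. eigenvalue Mm k} \<noteq> {}" using k by auto
  have "k \<le> Max {k. eigenvalue Mm k}" using fin k by (intro Max_ge) auto
  moreover have "Max {k. eigenvalue Mm k} < 2" using Max_in[OF fin ne] ub by auto
  ultimately show ?thesis unfolding M lambda_max_def using k by simp
qed

end
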